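(* Fix integers $1\le k\le n$, a graph $G$ on $n$ vertices, and $\alpha\in\mathbb{R}$. Then $A^{\circ\alpha}$ is positive semidefinite for all $A\in\mathcal{C}_n^k([0,\infty))$ if and only if $A^{\circ\alpha}$ is positive semidefinite for all $A\in\mathcal{P}_n^k([0,\infty))$; and $A^{\circ\alpha}\in\mathcal{P}_G$ for all $A\in\mathcal{C}_G([0,\infty))$ if and only if $A^{\circ\alpha}\in\mathcal{P}_G$ for all $A\in\mathcal{P}_G([0,\infty))$. The analogous equivalences hold for $f=\phi_\alpha$ and $f=\psi_\alpha$ applied entrywise, with $\mathcal{C}_n^k(\mathbb{R})$, $\mathcal{P}_n^k(\mathbb{R})$, $\mathcal{C}_G(\mathbb{R})$, $\mathcal{P}_G(\mathbb{R})$ in place of the sets with entries in $[0,\infty)$.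
   Context: For $I\subset\mathbb{R}$, $\mathcal{P}_n(I)$ is the set of real symmetric PSD $n\times n$ matrices with entries in $I$, and $\mathcal{P}_n^k(I)$ those of rank at most $k$. For a graph $G$ on $\{1,\dots,n\}$, $\mathcal{P}_G(I)$ is the set of matrices in $\mathcal{P}_n(I)$ with $a_{ij}=0$ whenever $i\neq j$ and $(i,j)$ is not an edge; $\mathcal{P}_G=\mathcal{P}_G(\mathbb{R})$. A correlation matrix is a PSD matrix with all diagonal entries equal to $1$; $\mathcal{C}_n^k(I)$ and $\mathcal{C}_G(I)$ denote the sets of correlation matrices in $\mathcal{P}_n^k(I)$ and $\mathcal{P}_G(I)$ respectively. $A^{\circ\alpha}=(a_{ij}^\alpha)$ with $0^\alpha:=0$; $\psi_\alpha(x)=\mathrm{sgn}(x)|x|^\alpha$, $\phi_\alpha(x)=|x|^\alpha$ ($x\ne0$), $\psi_\alpha(0)=\phi_\alpha(0)=0$, applied entrywise. *)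

theory Defs
  imports "HOL-Analysis.Analysis"
begin

definition psd :: "real^'n^'n \<Rightarrow> bool" where
  "psd A \<longleftrightarrow> transpose A = A \<and> (\<forall>x. 0 \<le> x \<bullet> (A *v x))"

definition Pn :: "real set \<Rightarrow> (real^'n^'n) set" where
  "Pn I = {A. psd A \<and> (\<forall>i j. A $ i $ j \<in> I)}"

definition Pnk :: "nat \<Rightarrow> real set \<Rightarrow> (real^'n^'n) set" where
  "Pnk k I = {A \<in> Pn I. rank A \<le> k}"

definition PG :: "('n \<Rightarrow> 'n \<Rightarrow> bool) \<Rightarrow> real set \<Rightarrow> (real^'n^'n) set" where
  "PG G I = {A \<in> Pn I. \<forall>i j. i \<noteq> j \<and> \<not> G i j \<longrightarrow> A $ i $ j = 0}"

definition is_corr :: "real^'n^'n \<Rightarrow> bool" where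
  "is_corr A \<longleftrightarrow> psd A \<and> (\<forall>i. A $ i $ i = 1)"

definition Cnk :: "nat \<Rightarrow> real set \<Rightarrow> (real^'n^'n) set" where
  "Cnk k I = {A \<in> Pnk k I. is_corr A}"

definition CG :: "('n \<Rightarrow> 'n \<Rightarrow> bool) \<Rightarrow> real set \<Rightarrow> (real^'n^'n) set" where
  "CG G I = {A \<in> PG G I. is_corr A}"

definition entrywise :: "(real \<Rightarrow> real) \<Rightarrow> real^'n^'n \<Rightarrow> real^'n^'n" where
  "entrywise f A = (\<chi> i j. f (A $ i $ j))"

text \<open>x^alpha with 0^alpha := 0 (used for nonnegative x); A^{o alpha} = entrywise (pow0 alpha) A.\<close>
definition pow0 :: "real \<Rightarrow> real \<Rightarrow> real" where
  "pow0 \<alpha> x = (if x = 0 then 0 else x powr \<alpha>)"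

definition phi :: "real \<Rightarrow> real \<Rightarrow> real" where
  "phi \<alpha> x = (if x = 0 then 0 else \<bar>x\<bar> powr \<alpha>)"

definition psi :: "real \<Rightarrow> real \<Rightarrow> real" where
  "psi \<alpha> x = (if x = 0 then 0 else sgn x * \<bar>x\<bar> powr \<alpha>)"

end

theory Submission
  imports Defs
begin

lemma quadform: "x \<bullet> (A *v x) = (\<Sum>i\<in>UNIV. \<Sum>j\<in>UNIV. x$i * A$i$j * x$j)"
  by (simp add: inner_vec_def matrix_vector_mult_def sum_distrib_left mult.assoc)

lemma sum_supp: "(\<And>a. a \<notin> S \<Longrightarrow> g a = 0) \<Longrightarrow> sum g (UNIV::'a::finite set) = sum g S"
  by (rule sum.mono_neutral_right) auto

lemma psd_sym: "psd A \<Longrightarrow> A$j$i = A$i$j"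
  unfolding psd_def by (metis transpose_def vec_lambda_beta)

lemma psd_diag_nonneg: assumes "psd A" shows "0 \<le> A$i$i"
proof -
  let ?x = "axis i (1::real)"
  have "0 \<le> ?x \<bullet> (A *v ?x)" using assms psd_def by blast
  also have "?x \<bullet> (A *v ?x) = A$i$i"
    unfolding quadform
    by (subst sum_supp[of "{i}"], simp add: axis_def, simp, subst sum_supp[of "{i}"], auto simp: axis_def)
  finally show ?thesis .
qed

lemma psd_zero_row: assumes "psd A" "A$i$i = 0" shows "A$i$j = 0"
proof (rule ccontr)
  assume ne: "A$i$j \<noteq> 0"
  hence ij: "i \<noteq> j" using assms by auto
  define t where "t = - (A$j$j + 1) / (2 * A$i$j)"
  let ?x = "(\<chi> l. if l = i then t else if l = j then 1 else 0) :: real^'a"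
  have "0 \<le> ?x \<bullet> (A *v ?x)" using assms psd_def by blast
  also have "?x \<bullet> (A *v ?x) = 2 * t * A$i$j + A$j$j"
  proof -
    have "?x \<bullet> (A *v ?x) = (\<Sum>a\<in>UNIV. \<Sum>b\<in>UNIV. ?x$a * A$a$b * ?x$b)" by (rule quadform)
    also have "\<dots> = (\<Sum>a\<in>{i,j}. \<Sum>b\<in>{i,j}. ?x$a * A$a$b * ?x$b)"
      by (subst sum_supp[of "{i,j}"], simp, rule sum.cong, simp, subst sum_supp[of "{i,j}"], auto)
    also have "\<dots> = t * (t * A$i$i + A$i$j) + (t * A$j$i + A$j$j)"
      using ij by (simp add: algebra_simps)
    finally show ?thesis using assms psd_sym[OF assms(1), of i j] by (simp add: algebra_simps)
  qed
  also have "\<dots> = -1" using ne by (simp add: t_def field_simps)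
  finally show False by simp
qed

locale constr =
  fixes A :: "real^'n::finite^'n" and \<sigma> :: "'n \<Rightarrow> 'n" and J :: "'n set"
  assumes psdA: "psd A"
begin

definition P where "P k \<longleftrightarrow> 0 < A$k$k"
definition d where "d k = sqrt (A$k$k)"
definition S :: "real^'n^'n" where "S = (\<chi> k i. if k = \<sigma> i \<and> P k then 1 / d k else 0)"
definition C :: "real^'n^'n" where
  "C = transpose S ** A ** S + (\<chi> i j. if i = j \<and> i \<in> J then 1 else 0)"

lemma S_entry: "S$k$i = (if k = \<sigma> i \<and> P k then 1 / d k else 0)"
  by (simp add: S_def)

lemma SA_entry: "(transpose S ** A)$i$l = (if P (\<sigma> i) then A$(\<sigma> i)$l / d (\<sigma> i) else 0)"
proof -
  have "(transpose S ** A)$i$l = (\<Sum>k\<in>UNIV. S$k$i * A$k$l)"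
    by (simp add: matrix_matrix_mult_def transpose_def)
  also have "\<dots> = (\<Sum>k\<in>{\<sigma> i}. S$k$i * A$k$l)"
    by (rule sum_supp) (simp add: S_entry)
  finally show ?thesis by (simp add: S_entry)
qed

lemma C_entry: "C$i$j = (if P (\<sigma> i) \<and> P (\<sigma> j) then A$(\<sigma> i)$(\<sigma> j) / (d (\<sigma> i) * d (\<sigma> j)) else 0)
   + (if i = j \<and> i \<in> J then 1 else 0)"
proof -
  have "(transpose S ** A ** S)$i$j = (\<Sum>l\<in>UNIV. (transpose S ** A)$i$l * S$l$j)"
    by (simp add: matrix_matrix_mult_def)
  also have "\<dots> = (\<Sum>l\<in>{\<sigma> j}. (transpose S ** A)$i$l * S$l$j)"
    by (rule sum_supp) (simp add: S_entry)
  also have "\<dots> = (transpose S ** A)$i$(\<sigma> j) * S$(\<sigma> j)$j" by simp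
  also have "\<dots> = (if P (\<sigma> i) \<and> P (\<sigma> j) then A$(\<sigma> i)$(\<sigma> j) / (d (\<sigma> i) * d (\<sigma> j)) else 0)"
    by (simp only: SA_entry S_entry) simp
  finally show ?thesis by (simp add: C_def)
qed

lemma psdC: "psd C"
  unfolding psd_def
proof
  show "transpose C = C"
    by (simp add: vec_eq_iff transpose_def C_entry psd_sym[OF psdA] mult.commute)
  show "\<forall>x. 0 \<le> x \<bullet> (C *v x)"
  proof
    fix x :: "real^'n"
    have 1: "x \<bullet> ((transpose S ** A ** S) *v x) = (S *v x) \<bullet> (A *v (S *v x))"
      by (metis dot_lmul_matrix matrix_vector_mul_assoc vector_transpose_matrix)
    have "0 \<le> (S *v x) \<bullet> (A *v (S *v x))" using psdA psd_def by blast
    moreover have "0 \<le> x \<bullet> ((\<chi> i j. if i = j \<and> i \<in> J then 1 else 0) *v x)"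
    proof -
      have "x \<bullet> ((\<chi> i j. if i = j \<and> i \<in> J then 1 else 0) *v x)
          = (\<Sum>i\<in>UNIV. \<Sum>j\<in>UNIV. x$i * (if i = j \<and> i \<in> J then 1 else 0) * x$j)"
        by (simp add: quadform)
      also have "\<dots> = (\<Sum>i\<in>UNIV. \<Sum>j\<in>{i}. x$i * (if i = j \<and> i \<in> J then 1 else 0) * x$j)"
        by (rule sum.cong, simp, rule sum_supp, auto)
      also have "\<dots> \<ge> 0" by (auto intro!: sum_nonneg)
      finally show ?thesis .
    qed
    ultimately show "0 \<le> x \<bullet> (C *v x)"
      by (simp add: C_def matrix_vector_mult_add_rdistrib inner_add_right 1)
  qed
qed

lemma rankC: "J = {} \<Longrightarrow> rank C \<le> rank A"
proof -
  assume "J = {}"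
  hence "C = transpose S ** A ** S" unfolding C_def by (simp add: vec_eq_iff)
  hence "rank C \<le> rank (transpose S ** A)" using rank_mul_le_left by metis
  also have "\<dots> \<le> rank A" by (rule rank_mul_le_right)
  finally show ?thesis .
qed

lemma corrC: "(\<And>i. P (\<sigma> i) \<or> i \<in> J) \<Longrightarrow> (\<And>i. i \<in> J \<Longrightarrow> \<not> P (\<sigma> i)) \<Longrightarrow> is_corr C"
  unfolding is_corr_def using psdC
  by (auto simp: C_entry d_def P_def)

lemma entriesC: "(\<forall>i j. A$i$j \<in> Iz) \<Longrightarrow> (Iz = {0..} \<or> Iz = UNIV) \<Longrightarrow> \<forall>i j. C$i$j \<in> Iz"
  by (auto simp: C_entry d_def)

lemma deduce:
  fixes f :: "real \<Rightarrow> real"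
  assumes ent: "\<forall>i j. A$i$j \<in> Iz" and Iz: "Iz = {0..} \<or> Iz = UNIV"
    and f0: "f 0 = 0" and fh: "\<And>c x. 0 < c \<Longrightarrow> x \<in> Iz \<Longrightarrow> f (c * x) = c powr \<alpha> * f x"
    and sig: "\<And>i. P i \<Longrightarrow> \<sigma> i = i" and JP: "\<And>i. i \<in> J \<Longrightarrow> \<not> P (\<sigma> i)"
    and pC: "psd (entrywise f C)"
  shows "psd (entrywise f A)"
  unfolding psd_def
proof
  show "transpose (entrywise f A) = entrywise f A"
    by (simp add: vec_eq_iff transpose_def entrywise_def psd_sym[OF psdA])
  show "\<forall>x. 0 \<le> x \<bullet> (entrywise f A *v x)"
  proof
    fix x :: "real^'n"
    define y where "y = (\<chi> i. if P i then d i powr \<alpha> * x$i else 0)"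
    have zero: "A$i$j = 0" if "\<not> P i \<or> \<not> P j" for i j
    proof -
      have "A$i$i = 0 \<or> A$j$j = 0" using that psd_diag_nonneg[OF psdA, of i] psd_diag_nonneg[OF psdA, of j] by (auto simp: P_def)
      thus ?thesis using psd_zero_row[OF psdA] psd_sym[OF psdA] by metis
    qed
    have trm: "x$i * entrywise f A $i$j * x$j = y$i * entrywise f C $i$j * y$j" for i j
    proof (cases "P i \<and> P j")
      case True
      hence pos: "0 < d i" "0 < d j" by (auto simp: P_def d_def)
      have Cij: "C$i$j = A$i$j / (d i * d j)"
        using True sig JP by (auto simp: C_entry) (metis sig JP)
      have "C$i$j \<in> Iz" using entriesC[OF ent Iz] by blast
      have "A$i$j = (d i * d j) * C$i$j" using Cij pos by simp
      hence "f (A$i$j) = (d i * d j) powr \<alpha> * f (C$i$j)"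
        using fh pos \<open>C$i$j \<in> Iz\<close> by simp
      thus ?thesis using True pos by (simp add: y_def entrywise_def powr_mult)
    next
      case False
      thus ?thesis using zero[of i j] f0 by (auto simp: y_def entrywise_def)
    qed
    have "x \<bullet> (entrywise f A *v x) = y \<bullet> (entrywise f C *v y)"
      unfolding quadform using trm by simp
    thus "0 \<le> x \<bullet> (entrywise f A *v x)" using pC psd_def by metis
  qed
qed

end

lemma pow0_hom: "0 < c \<Longrightarrow> x \<in> {0..} \<Longrightarrow> pow0 \<alpha> (c * x) = c powr \<alpha> * pow0 \<alpha> x"
  by (auto simp: pow0_def powr_mult)

lemma phi_hom: "0 < c \<Longrightarrow> x \<in> UNIV \<Longrightarrow> phi \<alpha> (c * x) = c powr \<alpha> * phi \<alpha> x"
  by (auto simp: phi_def abs_mult powr_mult)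

lemma psi_hom: "0 < c \<Longrightarrow> x \<in> UNIV \<Longrightarrow> psi \<alpha> (c * x) = c powr \<alpha> * psi \<alpha> x"
  by (auto simp: psi_def abs_mult powr_mult sgn_mult)

lemma zero_psd:
  fixes A :: "real^'n::finite^'n"
  assumes "\<And>i j. A$i$j = 0" shows "psd A"
  using assms unfolding psd_def by (simp add: quadform vec_eq_iff transpose_def)

lemma rank_equiv:
  fixes f :: "real \<Rightarrow> real" and Iz :: "real set"
  assumes Iz: "Iz = {0..} \<or> Iz = UNIV" and f0: "f 0 = 0"
    and fh: "\<And>c x. 0 < c \<Longrightarrow> x \<in> Iz \<Longrightarrow> f (c * x) = c powr \<alpha> * f x"
  shows "(\<forall>A \<in> (Cnk k Iz :: (real^'n::finite^'n) set). psd (entrywise f A)) \<longleftrightarrow>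
     (\<forall>A \<in> (Pnk k Iz :: (real^'n^'n) set). psd (entrywise f A))"
proof
  assume H: "\<forall>A \<in> (Cnk k Iz :: (real^'n::finite^'n) set). psd (entrywise f A)"
  show "\<forall>A \<in> (Pnk k Iz :: (real^'n^'n) set). psd (entrywise f A)"
  proof
    fix A :: "real^'n^'n" assume A: "A \<in> Pnk k Iz"
    hence psdA: "psd A" and ent: "\<forall>i j. A$i$j \<in> Iz" and rk: "rank A \<le> k"
      by (auto simp: Pnk_def Pn_def)
    show "psd (entrywise f A)"
    proof (cases "\<exists>i0. 0 < A$i0$i0")
      case True
      then obtain i0 where i0: "0 < A$i0$i0" by blast
      define \<sigma> where "\<sigma> i = (if 0 < A$i$i then i else i0)" for i
      interpret c: constr A \<sigma> "{}" by unfold_locales (rule psdA)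
      have "c.C \<in> Cnk k Iz"
        unfolding Cnk_def Pnk_def Pn_def
        using c.psdC c.entriesC[OF ent Iz] c.rankC rk
          c.corrC[unfolded c.P_def] i0 by (auto simp: \<sigma>_def)
      hence pC: "psd (entrywise f c.C)" using H by blast
      show ?thesis
        by (intro c.deduce[OF ent Iz f0 fh _ _ pC]) (auto simp: \<sigma>_def c.P_def)
    next
      case False
      hence "A$i$i = 0" for i using psd_diag_nonneg[OF psdA, of i] by (meson antisym not_less)
      hence "A$i$j = 0" for i j using psd_zero_row[OF psdA] by blast
      thus ?thesis by (intro zero_psd) (simp add: entrywise_def f0)
    qed
  qed
next
  assume "\<forall>A \<in> (Pnk k Iz :: (real^'n^'n) set). psd (entrywise f A)"
  thus "\<forall>A \<in> (Cnk k Iz :: (real^'n::finite^'n) set). psd (entrywise f A)"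
    by (auto simp: Cnk_def)
qed

lemma graph_equiv:
  fixes f :: "real \<Rightarrow> real" and Iz :: "real set" and G :: "'n::finite \<Rightarrow> 'n \<Rightarrow> bool"
  assumes Iz: "Iz = {0..} \<or> Iz = UNIV" and f0: "f 0 = 0"
    and fh: "\<And>c x. 0 < c \<Longrightarrow> x \<in> Iz \<Longrightarrow> f (c * x) = c powr \<alpha> * f x"
  shows "(\<forall>A \<in> CG G Iz. entrywise f A \<in> PG G UNIV) \<longleftrightarrow>
     (\<forall>A \<in> PG G Iz. entrywise f A \<in> PG G UNIV)"
proof
  assume H: "\<forall>A \<in> CG G Iz. entrywise f A \<in> PG G UNIV"
  show "\<forall>A \<in> PG G Iz. entrywise f A \<in> PG G UNIV"
  proof
    fix A assume A: "A \<in> PG G Iz"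
    hence psdA: "psd A" and ent: "\<forall>i j. A$i$j \<in> Iz"
      and pat: "\<And>i j. i \<noteq> j \<Longrightarrow> \<not> G i j \<Longrightarrow> A$i$j = 0"
      by (auto simp: PG_def Pn_def)
    interpret c: constr A id "{i. \<not> 0 < A$i$i}" by unfold_locales (rule psdA)
    have "c.C \<in> CG G Iz"
      unfolding CG_def PG_def Pn_def
      using c.psdC c.entriesC[OF ent Iz] c.corrC[unfolded c.P_def]
      by (auto simp: c.C_entry pat)
    hence pC: "psd (entrywise f c.C)" using H by (auto simp: PG_def Pn_def)
    have "psd (entrywise f A)"
      by (intro c.deduce[OF ent Iz f0 fh _ _ pC]) (auto simp: c.P_def)
    thus "entrywise f A \<in> PG G UNIV"
      by (auto simp: PG_def Pn_def entrywise_def pat f0)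
  qed
next
  assume "\<forall>A \<in> PG G Iz. entrywise f A \<in> PG G UNIV"
  thus "\<forall>A \<in> CG G Iz. entrywise f A \<in> PG G UNIV"
    by (auto simp: CG_def)
qed

theorem proposition4p15:
  fixes k :: nat and G :: "'n::finite \<Rightarrow> 'n \<Rightarrow> bool" and \<alpha> :: real
  assumes "1 \<le> k" and "k \<le> CARD('n)"
    and "\<And>i j. G i j \<Longrightarrow> G j i" and "\<And>i. \<not> G i i"
  shows
   "((\<forall>A \<in> (Cnk k {0..} :: (real^'n^'n) set). psd (entrywise (pow0 \<alpha>) A)) \<longleftrightarrow>
     (\<forall>A \<in> (Pnk k {0..} :: (real^'n^'n) set). psd (entrywise (pow0 \<alpha>) A)))
  \<and> ((\<forall>A \<in> CG G {0..}. entrywise (pow0 \<alpha>) A \<in> PG G UNIV) \<longleftrightarrow>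
     (\<forall>A \<in> PG G {0..}. entrywise (pow0 \<alpha>) A \<in> PG G UNIV))
  \<and> ((\<forall>A \<in> (Cnk k UNIV :: (real^'n^'n) set). psd (entrywise (phi \<alpha>) A)) \<longleftrightarrow>
     (\<forall>A \<in> (Pnk k UNIV :: (real^'n^'n) set). psd (entrywise (phi \<alpha>) A)))
  \<and> ((\<forall>A \<in> CG G UNIV. entrywise (phi \<alpha>) A \<in> PG G UNIV) \<longleftrightarrow>
     (\<forall>A \<in> PG G UNIV. entrywise (phi \<alpha>) A \<in> PG G UNIV))
  \<and> ((\<forall>A \<in> (Cnk k UNIV :: (real^'n^'n) set). psd (entrywise (psi \<alpha>) A)) \<longleftrightarrow>
     (\<forall>A \<in> (Pnk k UNIV :: (real^'n^'n) set). psd (entrywise (psi \<alpha>) A)))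
  \<and> ((\<forall>A \<in> CG G UNIV. entrywise (psi \<alpha>) A \<in> PG G UNIV) \<longleftrightarrow>
     (\<forall>A \<in> PG G UNIV. entrywise (psi \<alpha>) A \<in> PG G UNIV))"
proof -
  have pz: "pow0 \<alpha> 0 = 0" "phi \<alpha> 0 = 0" "psi \<alpha> 0 = 0" by (auto simp: pow0_def phi_def psi_def)
  have R1: "(\<forall>A \<in> (Cnk k {0..} :: (real^'n^'n) set). psd (entrywise (pow0 \<alpha>) A)) \<longleftrightarrow>
     (\<forall>A \<in> (Pnk k {0..} :: (real^'n^'n) set). psd (entrywise (pow0 \<alpha>) A))"
    by (rule rank_equiv[where \<alpha>=\<alpha>]) (simp_all add: pz pow0_hom)
  have R2: "(\<forall>A \<in> (Cnk k UNIV :: (real^'n^'n) set). psd (entrywise (phi \<alpha>) A)) \<longleftrightarrow>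
     (\<forall>A \<in> (Pnk k UNIV :: (real^'n^'n) set). psd (entrywise (phi \<alpha>) A))"
    by (rule rank_equiv[where \<alpha>=\<alpha>]) (simp_all add: pz phi_hom)
  have R3: "(\<forall>A \<in> (Cnk k UNIV :: (real^'n^'n) set). psd (entrywise (psi \<alpha>) A)) \<longleftrightarrow>
     (\<forall>A \<in> (Pnk k UNIV :: (real^'n^'n) set). psd (entrywise (psi \<alpha>) A))"
    by (rule rank_equiv[where \<alpha>=\<alpha>]) (simp_all add: pz psi_hom)
  have G1: "(\<forall>A \<in> CG G {0..}. entrywise (pow0 \<alpha>) A \<in> PG G UNIV) \<longleftrightarrow>
     (\<forall>A \<in> PG G {0..}. entrywise (pow0 \<alpha>) A \<in> PG G UNIV)"
    by (rule graph_equiv[where \<alpha>=\<alpha>]) (simp_all add: pz pow0_hom)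
  have G2: "(\<forall>A \<in> CG G UNIV. entrywise (phi \<alpha>) A \<in> PG G UNIV) \<longleftrightarrow>
     (\<forall>A \<in> PG G UNIV. entrywise (phi \<alpha>) A \<in> PG G UNIV)"
    by (rule graph_equiv[where \<alpha>=\<alpha>]) (simp_all add: pz phi_hom)
  have G3: "(\<forall>A \<in> CG G UNIV. entrywise (psi \<alpha>) A \<in> PG G UNIV) \<longleftrightarrow>
     (\<forall>A \<in> PG G UNIV. entrywise (psi \<alpha>) A \<in> PG G UNIV)"
    by (rule graph_equiv[where \<alpha>=\<alpha>]) (simp_all add: pz psi_hom)
  show ?thesis using R1 R2 R3 G1 G2 G3 by blast
qed

end
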